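(* Let $\alpha\in(0,\pi/2)$ and let $\mathbf X=(X_0,\dots,X_n)$ be a good input whose requests span the interval $[-1,r]$ of the $x$-axis, $0\le r\le 1$. Then the cost of the optimal offline algorithm is $$\mathrm{OPT}(\mathbf X;\alpha)=\begin{cases}\frac12\sqrt{(1+r)^2\cot^2\alpha+(1-r)^2} & \text{if } \alpha\le\pi/4 \text{ or } r\ge\frac{\tan^2\alpha-1}{1+\tan^2\alpha},\\ \cos\alpha & \text{otherwise.}\end{cases}$$
   Context: A drone with half angle-of-view $\alpha\in(0,\pi/2)$ at a point $(t_x,t_y)$, $t_y\ge0$, covers $[t_x-t_y\tan\alpha,t_x+t_y\tan\alpha]$ on the $x$-axis. An input is a sequence $X_0=(0,0),X_1,\dots,X_n$ ($n\ge1$) of points on the $x$-axis, $X_i=(x_i,0)$. A solution is a sequence of positions $P_0=(0,0),P_1,\dots,P_n$ in the closed upper half-plane such that $P_i$ covers $X_0,\dots,X_i$; its cost is $\sum_i|P_iP_{i+1}|$. $\mathrm{OPT}(\mathbf X;\alpha)$ is the minimum cost of a solution (input known in advance). A request $X_{i+1}$ is redundant if $x_{i+1}\in[\min_{j\le i}x_j,\max_{j\le i}x_j]$. An input is good if it has no redundant requests, $\min_j x_j=-1$ and $\max_j x_j\in[0,1]$. *)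

theory Defs
  imports Complex_Main
begin

text \<open>A drone at position (tx, ty) with half angle-of-view alpha covers the
  point (x, 0) of the x-axis iff x lies in [tx - ty tan alpha, tx + ty tan alpha].\<close>
definition covers :: "real \<Rightarrow> real \<times> real \<Rightarrow> real \<Rightarrow> bool" where
  "covers \<alpha> P x \<longleftrightarrow> fst P - snd P * tan \<alpha> \<le> x \<and> x \<le> fst P + snd P * tan \<alpha>"

definition pdist :: "real \<times> real \<Rightarrow> real \<times> real \<Rightarrow> real" where
  "pdist P Q = sqrt ((fst P - fst Q)^2 + (snd P - snd Q)^2)"

text \<open>Input: requests X_i = (x i, 0), i = 0..n, with x 0 = 0.
  A solution is a sequence of positions P_0 = (0,0), P_1, ..., P_n in the closed
  upper half-plane such that P_i covers X_0, ..., X_i.\<close>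
definition is_solution :: "real \<Rightarrow> nat \<Rightarrow> (nat \<Rightarrow> real) \<Rightarrow> (nat \<Rightarrow> real \<times> real) \<Rightarrow> bool" where
  "is_solution \<alpha> n x P \<longleftrightarrow> P 0 = (0, 0) \<and>
     (\<forall>i\<le>n. snd (P i) \<ge> 0 \<and> (\<forall>j\<le>i. covers \<alpha> (P i) (x j)))"

definition cost :: "nat \<Rightarrow> (nat \<Rightarrow> real \<times> real) \<Rightarrow> real" where
  "cost n P = (\<Sum>i<n. pdist (P i) (P (Suc i)))"

definition OPT :: "real \<Rightarrow> nat \<Rightarrow> (nat \<Rightarrow> real) \<Rightarrow> real" where
  "OPT \<alpha> n x = Inf {cost n P | P. is_solution \<alpha> n x P}"

definition redundant :: "(nat \<Rightarrow> real) \<Rightarrow> nat \<Rightarrow> bool" where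
  "redundant x i \<longleftrightarrow> Min (x ` {..i}) \<le> x (Suc i) \<and> x (Suc i) \<le> Max (x ` {..i})"

definition good_input :: "nat \<Rightarrow> (nat \<Rightarrow> real) \<Rightarrow> bool" where
  "good_input n x \<longleftrightarrow> 1 \<le> n \<and> x 0 = 0 \<and> (\<forall>i<n. \<not> redundant x i) \<and>
     Min (x ` {..n}) = -1 \<and> 0 \<le> Max (x ` {..n}) \<and> Max (x ` {..n}) \<le> 1"

end

theory Submission
  imports Defs "HOL-Analysis.Product_Vector"
begin

lemma apex_bound:
  fixes t r a b :: real
  assumes t: "t > 0" and r: "r \<le> 1" "0 \<le> r" and cond: "r * (1 + t^2) \<ge> t^2 - 1"
    and h1: "a - b * t \<le> -1" and h2: "a + b * t \<ge> r"
  shows "((r-1)/2)^2 + ((1+r)/(2*t))^2 \<le> a^2 + b^2"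
proof -
  define a0 where "a0 = (r-1)/2"
  define b0 where "b0 = (1+r)/(2*t)"
  define u where "u = a - a0"
  define v where "v = b - b0"
  define lam where "lam = ((1+r)/t^2 - (r-1))/4"
  define mu where "mu = ((1+r)/t^2 + (r-1))/4"
  have "(1+r)/t^2 \<ge> 0" using r by simp
  hence "(1+r)/t^2 - (r-1) \<ge> 0" using r by linarith
  hence lam: "lam \<ge> 0" unfolding lam_def by simp
  have "(1+r) \<ge> (1-r)*t^2" using cond by (simp add: algebra_simps)
  hence "(1+r)/t^2 \<ge> 1 - r" using t by (simp add: pos_le_divide_eq)
  hence mu: "mu \<ge> 0" unfolding mu_def by simp
  have "t*v - u = t*b - a - 1" using t unfolding u_def v_def a0_def b0_def
    by (simp add: field_simps)
  hence e1: "t*v - u \<ge> 0" using h1 by (simp add: mult.commute)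
  have "u + t*v = a + t*b - r" using t unfolding u_def v_def a0_def b0_def
    by (simp add: field_simps)
  hence e2: "u + t*v \<ge> 0" using h2 by (simp add: mult.commute)
  have key: "a0*u + b0*v = lam*(t*v - u) + mu*(u + t*v)"
    unfolding lam_def mu_def a0_def b0_def using t by (simp add: field_simps power2_eq_square)
  have "a0*u + b0*v \<ge> 0" unfolding key using lam mu e1 e2 by simp
  moreover have "a^2 + b^2 = a0^2 + b0^2 + 2*(a0*u+b0*v) + u^2 + v^2"
    unfolding u_def v_def by (simp add: power2_eq_square algebra_simps)
  ultimately show ?thesis unfolding a0_def[symmetric] b0_def[symmetric]
    by (smt (verit) zero_le_power2)
qed

lemma foot_bound:
  fixes t a b :: real
  assumes t: "t > 0" and h1: "a - b * t \<le> -1"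
  shows "1 / (1 + t^2) \<le> a^2 + b^2"
proof -
  have "(a - b*t)^2 \<le> (a^2+b^2)*(1+t^2)"
    using zero_le_power2[of "a*t + b"] by (simp add: power2_eq_square algebra_simps)
  moreover have "1 \<le> (a - b*t)^2" using h1
    by (smt (verit) one_le_power power2_minus)
  ultimately have "1 \<le> (a^2+b^2)*(1+t^2)" by linarith
  thus ?thesis by (simp add: divide_le_eq add_pos_nonneg)
qed


lemma region:
  fixes t r :: real
  assumes t: "t > 0" and r: "0 \<le> r" "r \<le> 1"
  defines "D \<equiv> (if t \<le> 1 \<or> r*(1+t^2) \<ge> t^2-1
        then sqrt ((1+r)^2*(1/t)^2 + (1-r)^2)/2 else 1/sqrt(1+t^2))"
  shows "\<And>a b. a - b*t \<le> -1 \<Longrightarrow> a + b*t \<ge> r \<Longrightarrow> D \<le> sqrt (a^2+b^2)"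
    and "\<exists>a b. b \<ge> 0 \<and> a - b*t \<le> -1 \<and> a + b*t \<ge> r \<and> sqrt (a^2+b^2) = D"
proof -
  have sq: "sqrt ((1+r)^2*(1/t)^2 + (1-r)^2)/2 = sqrt (((r-1)/2)^2 + ((1+r)/(2*t))^2)"
  proof -
    have e: "((r-1)/2)^2 + ((1+r)/(2*t))^2 = ((1+r)^2*(1/t)^2 + (1-r)^2)/4"
      using t by (simp add: field_simps power2_eq_square)
    have f: "sqrt (4::real) = 2" by (simp add: real_sqrt_unique)
    show ?thesis unfolding e real_sqrt_divide f ..
  qed
  have sq2: "1/sqrt(1+t^2) = sqrt (1/(1+t^2))" by (simp add: real_sqrt_divide)
  {
    fix a b :: real
    assume h1: "a - b*t \<le> -1" and h2: "a + b*t \<ge> r"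
    show "D \<le> sqrt (a^2+b^2)"
    proof (cases "t \<le> 1 \<or> r*(1+t^2) \<ge> t^2-1")
      case True
      have c: "r*(1+t^2) \<ge> t^2-1"
      proof (cases "t \<le> 1")
        case True
        hence "t^2 \<le> 1" using t by (simp add: power_le_one)
        moreover have "r*(1+t^2) \<ge> 0" using r by simp
        ultimately show ?thesis by linarith
      qed (use True in auto)
      have "((r-1)/2)^2 + ((1+r)/(2*t))^2 \<le> a^2 + b^2"
        by (rule apex_bound[OF t r(2) r(1) c h1 h2])
      thus ?thesis using True unfolding D_def sq by (simp add: real_sqrt_le_mono)
    next
      case False
      have "1/(1+t^2) \<le> a^2+b^2" by (rule foot_bound[OF t h1])
      thus ?thesis using False unfolding D_def sq2 by (simp add: real_sqrt_le_mono del: real_sqrt_le_iff)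
    qed
  }
  show "\<exists>a b. b \<ge> 0 \<and> a - b*t \<le> -1 \<and> a + b*t \<ge> r \<and> sqrt (a^2+b^2) = D"
  proof (cases "t \<le> 1 \<or> r*(1+t^2) \<ge> t^2-1")
    case True
    show ?thesis
    proof (intro exI conjI)
      show "(1+r)/(2*t) \<ge> 0" using t r by simp
      show "(r-1)/2 - (1+r)/(2*t)*t \<le> -1" using t by (simp add: field_simps)
      show "(r-1)/2 + (1+r)/(2*t)*t \<ge> r" using t by (simp add: field_simps)
      show "sqrt (((r-1)/2)^2 + ((1+r)/(2*t))^2) = D" using True unfolding D_def sq by simp
    qed
  next
    case False
    have p: "1 + t^2 > 0" by (simp add: add_pos_nonneg)
    show ?thesis
    proof (intro exI conjI)
      show "t/(1+t^2) \<ge> 0" using t p by simp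
      show "-1/(1+t^2) - t/(1+t^2)*t \<le> -1" using p by (simp add: field_simps power2_eq_square)
      have e: "-1/(1+t^2) + t/(1+t^2)*t = (t^2-1)/(1+t^2)"
        by (simp add: diff_divide_distrib power2_eq_square)
      have "r*(1+t^2) \<le> t^2-1" using False by simp
      thus "-1/(1+t^2) + t/(1+t^2)*t \<ge> r" unfolding e using p by (simp add: pos_le_divide_eq)
      have "(-1/(1+t^2))^2 + (t/(1+t^2))^2 = (1+t^2)/(1+t^2)^2"
        by (simp add: power_divide add_divide_distrib)
      also have "\<dots> = 1/(1+t^2)" using p by (simp add: power2_eq_square)
      finally have "(-1/(1+t^2))^2 + (t/(1+t^2))^2 = 1/(1+t^2)" .
      thus "sqrt ((-1/(1+t^2))^2 + (t/(1+t^2))^2) = D" using False unfolding D_def sq2 by simp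
    qed
  qed
qed


lemma pdist_dist: "pdist P Q = dist P Q"
  by (simp add: pdist_def dist_prod_def dist_real_def)

lemma cost_ge: "pdist (P 0) (P m) \<le> cost m P"
proof (induction m)
  case 0
  then show ?case by (simp add: cost_def pdist_def)
next
  case (Suc m)
  have "pdist (P 0) (P (Suc m)) \<le> pdist (P 0) (P m) + pdist (P m) (P (Suc m))"
    unfolding pdist_dist by (rule dist_triangle)
  also have "\<dots> \<le> cost (Suc m) P" using Suc by (simp add: cost_def)
  finally show ?case .
qed

theorem lemma2:
  fixes \<alpha> r :: real and n :: nat and x :: "nat \<Rightarrow> real"
  assumes "0 < \<alpha>" and "\<alpha> < pi / 2"
    and "good_input n x"
    and "Max (x ` {..n}) = r"
  shows "OPT \<alpha> n x =
    (if \<alpha> \<le> pi / 4 \<or> r \<ge> ((tan \<alpha>)^2 - 1) / (1 + (tan \<alpha>)^2)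
     then sqrt ((1 + r)^2 * (cot \<alpha>)^2 + (1 - r)^2) / 2
     else cos \<alpha>)" (is "_ = ?D")
proof -
  define t where "t = tan \<alpha>"
  have t: "t > 0" unfolding t_def using assms(1,2) by (rule tan_gt_zero)
  have g: "1 \<le> n" "x 0 = 0" "Min (x ` {..n}) = -1" "0 \<le> r" "r \<le> 1"
    using assms(3,4) unfolding good_input_def by auto
  have fin: "finite (x ` {..n})" "x ` {..n} \<noteq> {}" by auto
  have xr: "x j \<in> {-1..r}" if "j \<le> n" for j
    using Min_le[OF fin(1), of "x j"] Max_ge[OF fin(1), of "x j"] that g(3) assms(4) by auto
  obtain jm where jm: "jm \<le> n" "x jm = -1" using Min_in[OF fin] g(3) by force
  obtain jM where jM: "jM \<le> n" "x jM = r" using Max_in[OF fin] assms(4) by force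
  have cosp: "cos \<alpha> > 0" using assms(1,2) by (intro cos_gt_zero_pi) auto
  have cotv: "cot \<alpha> = 1/t" unfolding t_def cot_altdef by (simp add: divide_inverse)
  have p: "1 + t^2 > 0" by (simp add: add_pos_nonneg)
  have cosv: "cos \<alpha> = 1/sqrt(1+t^2)"
  proof -
    have "1 + t^2 = (inverse (cos \<alpha>))^2" unfolding t_def using cosp by (simp add: tan_sec)
    hence "sqrt (1+t^2) = inverse (cos \<alpha>)" using cosp by simp
    thus ?thesis by (simp add: divide_inverse)
  qed
  have condeq: "(\<alpha> \<le> pi / 4 \<or> r \<ge> ((tan \<alpha>)^2 - 1) / (1 + (tan \<alpha>)^2))
      = (t \<le> 1 \<or> r*(1+t^2) \<ge> t^2-1)"
  proof -
    have a: "(\<alpha> \<le> pi/4) = (t \<le> 1)" unfolding t_def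
      using tan_mono_le_eq[of \<alpha> "pi/4"] assms(1,2) tan_45 by auto
    have b: "(r \<ge> (t^2 - 1) / (1 + t^2)) = (r*(1+t^2) \<ge> t^2-1)"
      using p by (simp add: pos_divide_le_eq)
    show ?thesis using a b unfolding t_def by simp
  qed
  define D where "D \<equiv> (if t \<le> 1 \<or> r*(1+t^2) \<ge> t^2-1
        then sqrt ((1+r)^2*(1/t)^2 + (1-r)^2)/2 else 1/sqrt(1+t^2))"
  have DD: "?D = D" unfolding D_def condeq cotv cosv ..
  note R = region[OF t g(4) g(5)]
  have low: "D \<le> c" if cin: "c \<in> {cost n P | P. is_solution \<alpha> n x P}" for c
  proof -
    obtain P where c: "c = cost n P" and sol: "is_solution \<alpha> n x P" using cin by auto
    have P0: "P 0 = (0,0)" using sol unfolding is_solution_def by auto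
    have c1: "covers \<alpha> (P n) (x jm)" "covers \<alpha> (P n) (x jM)"
      using sol jm(1) jM(1) unfolding is_solution_def by auto
    have h1: "fst (P n) - snd (P n) * t \<le> -1" using c1(1) jm unfolding covers_def t_def by auto
    have h2: "fst (P n) + snd (P n) * t \<ge> r" using c1(2) jM unfolding covers_def t_def by auto
    have "D \<le> sqrt ((fst (P n))^2 + (snd (P n))^2)" unfolding D_def by (rule R(1)[OF h1 h2])
    also have "\<dots> = pdist (P 0) (P n)" unfolding P0 pdist_def by simp
    also have "\<dots> \<le> c" unfolding c by (rule cost_ge)
    finally show ?thesis .
  qed
  obtain a b where ab: "b \<ge> 0" "a - b*t \<le> -1" "a + b*t \<ge> r" "sqrt (a^2+b^2) = D"
    using R(2) unfolding D_def by blast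
  define P where "P = (\<lambda>i::nat. if i = 0 then (0::real,0::real) else (a,b))"
  have solP: "is_solution \<alpha> n x P"
    unfolding is_solution_def
  proof (intro conjI allI impI)
    show "P 0 = (0,0)" by (simp add: P_def)
    fix i j assume i: "i \<le> n"
    show "0 \<le> snd (P i)" using ab by (simp add: P_def)
    assume j: "j \<le> i"
    have xj: "x j \<in> {-1..r}" using xr i j by auto
    show "covers \<alpha> (P i) (x j)"
    proof (cases "i = 0")
      case True
      then show ?thesis using j g(2) by (simp add: P_def covers_def)
    next
      case False
      then show ?thesis using xj ab unfolding P_def covers_def t_def[symmetric] by auto
    qed
  qed
  have costP: "cost n P = D"
  proof -
    have "cost n P = (\<Sum>i<n. if i = 0 then D else 0)"
      unfolding cost_def
    proof (rule sum.cong)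
      fix i assume "i \<in> {..<n}"
      show "pdist (P i) (P (Suc i)) = (if i = 0 then D else 0)"
        using ab(4) by (simp add: P_def pdist_def)
    qed simp
    also have "\<dots> = D" using g(1) by (simp add: sum.delta')
    finally show ?thesis .
  qed
  have "OPT \<alpha> n x = D" unfolding OPT_def
    by (rule cInf_eq_minimum) (use solP costP low in auto)
  thus ?thesis using DD by simp
qed

end
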